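(* For every integer $j\ge1$, the graph $K_{2j+4}^{(j+2)*}$ on $n=2j+4$ vertices satisfies \[\lambda_1-\lambda_{n-j}=\frac{(2j+5)+\sqrt{4j^2+16j+17}}{2},\] and hence \[s_{0,j}\ge\frac{(2j+5)+\sqrt{4j^2+16j+17}}{4(j+2)}.\]
   Context: $K_m^{t*}$ denotes the complete graph $K_m$ with loops added at exactly $t$ of its vertices. Graphs with loops are identified with their symmetric $(0,1)$ adjacency matrices (diagonal entry $1$ iff loop), eigenvalues listed $\lambda_1\ge\cdots\ge\lambda_n$. For a simple graph $G$ on $n$ vertices, ${\rm spread}_{i,j}(G)=\lambda_{i+1}(G)-\lambda_{n-j}(G)$; ${\rm spread}_{i,j}(n)$ is its maximum over simple graphs on $n$ vertices and $s_{i,j}=\lim_{n\to\infty}{\rm spread}_{i,j}(n)/n$ (known to exist, and known to equal the analogous limit taken over graphs with at most one loop per vertex). *)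

theory Defs
  imports "Jordan_Normal_Form.Char_Poly" "HOL-Computational_Algebra.Polynomial" "HOL-Library.Multiset"
begin

text \<open>For real symmetric matrices (adjacency matrices)
  the characteristic polynomial splits over the reals, so this list has length n.\<close>
definition eigs :: "real mat \<Rightarrow> real list" where
  "eigs A = rev (sorted_list_of_multiset (proots (char_poly A)))"

text \<open>lambda_k(A), 1-indexed: lambda_1 >= lambda_2 >= ... >= lambda_n.\<close>
definition lam :: "real mat \<Rightarrow> nat \<Rightarrow> real" where
  "lam A k = eigs A ! (k - 1)"

text \<open>Adjacency matrix of K_m^{t*}: complete graph on m vertices with loops at
  the vertices 0..t-1 (exactly t vertices when t <= m).\<close>
definition Kloop :: "nat \<Rightarrow> nat \<Rightarrow> real mat" where
  "Kloop m t = mat m m (\<lambda>(a, b). if a \<noteq> b then 1 else if a < t then 1 else 0)"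

text \<open>Symmetric (0,1) matrices of size n: graphs with at most one loop per vertex.\<close>
definition looped_graph_mat :: "nat \<Rightarrow> real mat \<Rightarrow> bool" where
  "looped_graph_mat n A \<longleftrightarrow> A \<in> carrier_mat n n \<and> A\<^sup>T = A \<and>
     (\<forall>a<n. \<forall>b<n. A $$ (a, b) = 0 \<or> A $$ (a, b) = 1)"

definition simple_graph_mat :: "nat \<Rightarrow> real mat \<Rightarrow> bool" where
  "simple_graph_mat n A \<longleftrightarrow> looped_graph_mat n A \<and> (\<forall>a<n. A $$ (a, a) = 0)"

definition spread_ij :: "nat \<Rightarrow> nat \<Rightarrow> real mat \<Rightarrow> real" where
  "spread_ij i j A = lam A (i + 1) - lam A (dim_row A - j)"

definition spread_n :: "nat \<Rightarrow> nat \<Rightarrow> nat \<Rightarrow> real" where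
  "spread_n i j n = Max (spread_ij i j ` {A. simple_graph_mat n A})"

definition spread_loop_n :: "nat \<Rightarrow> nat \<Rightarrow> nat \<Rightarrow> real" where
  "spread_loop_n i j n = Max (spread_ij i j ` {A. looped_graph_mat n A})"

definition s_ij :: "nat \<Rightarrow> nat \<Rightarrow> real" where
  "s_ij i j = lim (\<lambda>n. spread_n i j n / real n)"

end

theory Submission
  imports Defs
begin


definition G :: "nat \<Rightarrow> (nat \<Rightarrow> nat \<Rightarrow> real) \<Rightarrow> (nat \<Rightarrow> nat) \<Rightarrow> (nat \<Rightarrow> real) \<Rightarrow> (nat \<Rightarrow> real) \<Rightarrow> real mat" where
  "G n h cl wt dd = mat n n (\<lambda>(x,y). wt x * h (cl x) (cl y) + (if x = y then dd x else 0))"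

lemma det2: fixes f :: "nat \<times> nat \<Rightarrow> 'a::comm_ring_1"
  shows "det (mat 2 2 f) = f(0,0)*f(1,1) - f(0,1)*f(1,0)"
proof -
  have c: "mat 2 2 f \<in> carrier_mat 2 2" by simp
  show ?thesis
    apply (subst laplace_expansion_column[OF c, of 0])
     apply simp
    apply (simp add: numeral_2_eq_2 lessThan_Suc cofactor_def)
    apply (subst (1 2) laplace_expansion_column[of _ 1 0])
    apply (auto simp: mat_delete_def cofactor_def)
    done
qed



lemma merge_last:
  assumes u: "u < m" and cl: "cl u = cl m" and d0: "dd u = 0" "dd m = 0"
  shows "char_poly (G (Suc m) h cl wt dd) = [:0,1:] * char_poly (G m h cl (wt(u := wt u + wt m)) dd)"
proof -
  let ?n = "Suc m"
  define A where "A = G ?n h cl wt dd"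
  define S :: "real mat" where "S = mat ?n ?n (\<lambda>(i,j). (if i = j then 1 else 0) + (if i = u \<and> j = m then -1 else 0))"
  define T :: "real mat" where "T = mat ?n ?n (\<lambda>(i,j). (if i = j then 1 else 0) + (if i = u \<and> j = m then 1 else 0))"
  define B :: "real mat" where "B = mat ?n ?n (\<lambda>(i,j). if j = m then 0 else A $$ (i,j) + (if i = u then A $$ (m,j) else 0))"
  have Ac: "A \<in> carrier_mat ?n ?n" unfolding A_def G_def by simp
  have Sc: "S \<in> carrier_mat ?n ?n" unfolding S_def by simp
  have Tc: "T \<in> carrier_mat ?n ?n" unfolding T_def by simp
  have Bc: "B \<in> carrier_mat ?n ?n" unfolding B_def by simp
  have colAeq: "A $$ (i, m) = A $$ (i, u)" if "i < ?n" for i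
    using that u cl d0 by (auto simp: A_def G_def)
  have TA: "T * A = mat ?n ?n (\<lambda>(i,j). A $$ (i,j) + (if i = u then A $$ (m,j) else 0))"
    apply (rule eq_matI)
    using Ac u by (auto simp: T_def scalar_prod_def sum.distrib if_distrib[of "\<lambda>x. x * _"] sum.delta cong: if_cong)
  have TAS: "T * A * S = B"
    apply (rule eq_matI)
    using Ac u colAeq unfolding TA by (auto simp: S_def B_def scalar_prod_def sum.distrib if_distrib[of "\<lambda>x. _ * x"] sum.delta cong: if_cong)
  have ST: "S * T = 1\<^sub>m ?n"
    apply (rule eq_matI)
    using u by (auto simp: S_def T_def scalar_prod_def sum.distrib if_distrib[of "\<lambda>x. _ * x"] sum.delta cong: if_cong)
  have TS: "T * S = 1\<^sub>m ?n"
    apply (rule eq_matI)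
    using u by (auto simp: S_def T_def scalar_prod_def sum.distrib if_distrib[of "\<lambda>x. _ * x"] sum.delta cong: if_cong)
  have "A = S * B * T"
  proof -
    have "S * B * T = S * (T * A * S) * T" by (simp add: TAS)
    also have "\<dots> = (S * T) * A * (S * T)"
      using Ac Sc Tc by (simp add: assoc_mult_mat[of _ ?n ?n _ ?n _ ?n])
    also have "\<dots> = A" using Ac by (simp add: ST)
    finally show ?thesis by simp
  qed
  hence sim: "similar_mat A B"
    by (intro similar_matI[of _ _ S T ?n]) (use Ac Bc Sc Tc ST TS in auto)
  have "char_poly A = char_poly B" by (rule char_poly_similar[OF sim])
  also have "\<dots> = monom 1 1 * char_poly (mat_delete B m m)"
    by (rule char_poly_0_column[OF _ Bc], auto simp: B_def)
  also have "mat_delete B m m = G m h cl (wt(u := wt u + wt m)) dd"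
    apply (rule eq_matI)
    using u cl by (auto simp: mat_delete_def B_def A_def G_def algebra_simps)
  finally show ?thesis by (simp add: A_def x_as_monom)
qed



lemma G_cong: assumes "\<And>x. x < n \<Longrightarrow> wt x = wt' x"
  shows "G n h cl wt dd = G n h cl wt' dd"
  using assms by (auto simp: G_def intro!: eq_matI)

lemma quot:
  assumes "m \<le> n" "\<forall>x<m. cl x = x" "\<forall>x<n. cl x < m" "\<forall>x. m \<le> x \<and> x < n \<longrightarrow> dd x = 0 \<and> dd (cl x) = 0"
  shows "char_poly (G n h cl wt dd) = [:0,1:]^(n-m) * char_poly (G m h cl (\<lambda>c. \<Sum>x\<in>{x. x<n \<and> cl x = c}. wt x) dd)"
  using assms
proof (induction n arbitrary: wt)
  case 0
  then show ?case by (auto intro!: arg_cong[where f=char_poly] G_cong)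
next
  case (Suc n)
  show ?case
  proof (cases "m = Suc n")
    case True
    have "G m h cl wt dd = G m h cl (\<lambda>c. \<Sum>x\<in>{x. x<Suc n \<and> cl x = c}. wt x) dd"
    proof (rule G_cong)
      fix x assume x: "x < m"
      have "{y. y < Suc n \<and> cl y = x} = {x}" using Suc.prems True x by auto
      then show "wt x = (\<Sum>y\<in>{y. y<Suc n \<and> cl y = x}. wt y)" by simp
    qed
    then show ?thesis using True by simp
  next
    case False
    hence mn: "m \<le> n" using Suc.prems by auto
    define u where "u = cl n"
    have u: "u < n" "cl u = cl n" using Suc.prems mn by (auto simp: u_def)
    have clu: "cl u = u" using Suc.prems mn by (auto simp: u_def)
    have d: "dd u = 0" "dd n = 0" using Suc.prems mn by (auto simp: u_def)
    define wt' where "wt' = wt(u := wt u + wt n)"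
    have "char_poly (G (Suc n) h cl wt dd) = [:0,1:] * char_poly (G n h cl wt' dd)"
      unfolding wt'_def by (rule merge_last[OF u d])
    also have "char_poly (G n h cl wt' dd) = [:0,1:]^(n-m) * char_poly (G m h cl (\<lambda>c. \<Sum>x\<in>{x. x<n \<and> cl x = c}. wt' x) dd)"
      by (rule Suc.IH) (use Suc.prems mn in auto)
    also have "G m h cl (\<lambda>c. \<Sum>x\<in>{x. x<n \<and> cl x = c}. wt' x) dd = G m h cl (\<lambda>c. \<Sum>x\<in>{x. x<Suc n \<and> cl x = c}. wt x) dd"
    proof (rule G_cong)
      fix c assume c: "c < m"
      show "(\<Sum>x\<in>{x. x<n \<and> cl x = c}. wt' x) = (\<Sum>x\<in>{x. x<Suc n \<and> cl x = c}. wt x)"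
      proof (cases "c = u")
        case True
        have e: "{x. x<Suc n \<and> cl x = c} = insert n {x. x<n \<and> cl x = c}" using True u by (auto simp: u_def)
        have uin: "u \<in> {x. x<n \<and> cl x = c}" using True u Suc.prems mn by (auto simp: u_def)
        have "(\<Sum>x\<in>{x. x<n \<and> cl x = c}. wt' x) = wt' u + (\<Sum>x\<in>{x. x<n \<and> cl x = c} - {u}. wt' x)"
          by (rule sum.remove[OF _ uin]) auto
        also have "(\<Sum>x\<in>{x. x<n \<and> cl x = c} - {u}. wt' x) = (\<Sum>x\<in>{x. x<n \<and> cl x = c} - {u}. wt x)"
          by (rule sum.cong) (auto simp: wt'_def)
        also have "(\<Sum>x\<in>{x. x<n \<and> cl x = c}. wt x) = wt u + (\<Sum>x\<in>{x. x<n \<and> cl x = c} - {u}. wt x)"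
          by (rule sum.remove[OF _ uin]) auto
        ultimately show ?thesis unfolding e by (simp add: wt'_def)
      next
        case False
        have "cl n \<noteq> c" using False by (simp add: u_def)
        hence e: "{x. x<Suc n \<and> cl x = c} = {x. x<n \<and> cl x = c}" by (auto simp: less_Suc_eq)
        show ?thesis unfolding e by (rule sum.cong) (use False clu in \<open>auto simp: wt'_def\<close>)
      qed
    qed
    finally show ?thesis using mn by (simp add: Suc_diff_le)
  qed
qed



lemma char_poly_shift:
  fixes A :: "real mat" assumes A: "A \<in> carrier_mat n n"
  shows "char_poly (A + c \<cdot>\<^sub>m 1\<^sub>m n) = pcompose (char_poly A) [:-c, 1:]"
proof -
  have A': "A + c \<cdot>\<^sub>m 1\<^sub>m n \<in> carrier_mat n n" using A by simp
  have "poly (char_poly (A + c \<cdot>\<^sub>m 1\<^sub>m n)) e = poly (pcompose (char_poly A) [:-c, 1:]) e" for e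
  proof -
    have "char_matrix (A + c \<cdot>\<^sub>m 1\<^sub>m n) e = char_matrix A (e - c)"
      using A by (auto simp: char_matrix_def intro!: eq_matI)
    then show ?thesis
      by (simp add: char_poly_matrix[OF A'] char_poly_matrix[OF A] poly_pcompose)
  qed
  then show ?thesis using poly_eq_poly_eq_iff by blast
qed



definition h1 :: "nat \<Rightarrow> nat \<Rightarrow> real" where
  "h1 c d = (if c = 0 \<or> d = 0 then 1 else if c = d then 0 else 1)"

definition cl1 :: "nat \<Rightarrow> nat \<Rightarrow> nat \<Rightarrow> nat" where
  "cl1 q k x = (if x \<le> q then x else if x < q + q*k then 0 else 1 + (x - (q + q*k)) div (k - 1))"

definition Bl :: "nat \<Rightarrow> nat \<Rightarrow> real mat" where
  "Bl q k = G (2*q*k) h1 (cl1 q k) (\<lambda>_. 1) (\<lambda>_. 0)"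

lemma div_range: fixes t d e :: nat assumes "d > 0"
  shows "t div d = e \<longleftrightarrow> e*d \<le> t \<and> t < Suc e * d"
proof
  assume h: "t div d = e"
  have a: "t = e * d + t mod d" using h by (metis div_mult_mod_eq)
  have b: "t mod d < d" using assms by simp
  have c: "Suc e * d = e * d + d" by simp
  show "e*d \<le> t \<and> t < Suc e * d" using a b c by linarith
next
  assume "e*d \<le> t \<and> t < Suc e * d"
  then show "t div d = e" by (intro div_nat_eqI) (auto simp: mult.commute)
qed

lemma two_qk: fixes q k :: nat assumes "k \<ge> 1" shows "q + q*k \<le> 2*q*k"
proof -
  have "q \<le> q * k" using assms by simp
  then show ?thesis by simp
qed

lemma cl1_lt: assumes "x < 2*q*k" "k \<ge> 1" shows "cl1 q k x < q + 1"
proof -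
  consider "x \<le> q" | "q < x" "x < q + q*k" | "q + q*k \<le> x" by linarith
  then show ?thesis
  proof cases
    case 3
    hence k2: "k \<ge> 2" using assms by (cases "k = 1") auto
    have "x - (q + q*k) < q * (k - 1)" using assms 3 by (simp add: algebra_simps)
    hence "(x - (q + q*k)) div (k - 1) < q" using k2 by (simp add: div_less_iff_less_mult)
    then show ?thesis using 3 by (auto simp: cl1_def)
  qed (auto simp: cl1_def)
qed

lemma card_cl0: assumes "k \<ge> 1" "q \<ge> 1"
  shows "card {x. x < 2*q*k \<and> cl1 q k x = 0} = q * k"
proof -
  have "{x. x < 2*q*k \<and> cl1 q k x = 0} = insert 0 {q+1..<q+q*k}"
  proof -
    have "q + q*k \<le> 2*q*k" using assms two_qk by simp
    then show ?thesis using assms by (auto simp: cl1_def intro: less_le_trans)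
  qed
  moreover have "q * k \<ge> 1" using assms by simp
  ultimately show ?thesis by simp
qed

lemma card_clc: assumes "k \<ge> 1" "q \<ge> 1" "1 \<le> c" "c \<le> q"
  shows "card {x. x < 2*q*k \<and> cl1 q k x = c} = k"
proof -
  let ?a = "q + q*k + (c-1)*(k-1)" and ?b = "q + q*k + c*(k-1)"
  have "{x. x < 2*q*k \<and> cl1 q k x = c} = insert c {?a..<?b}"
  proof (cases "k = 1")
    case True
    then show ?thesis using assms by (auto simp: cl1_def)
  next
    case False
    hence k2: "k - 1 > 0" using assms by simp
    have cq: "c * (k-1) \<le> q * (k-1)" using assms by simp
    show ?thesis
    proof (rule equalityI; rule subsetI)
      fix x assume x: "x \<in> {x. x < 2*q*k \<and> cl1 q k x = c}"
      show "x \<in> insert c {?a..<?b}"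
      proof (cases "x < q + q*k")
        case True
        then show ?thesis using x assms by (auto simp: cl1_def split: if_splits)
      next
        case F: False
        define t where "t = x - (q + q*k)"
        have "t div (k-1) = c - 1" using x F assms by (auto simp: cl1_def t_def)
        hence "(c-1)*(k-1) \<le> t \<and> t < Suc (c-1)*(k-1)" using k2 div_range by blast
        hence "(c-1)*(k-1) \<le> t \<and> t < c*(k-1)" using assms by simp
        then show ?thesis using F by (auto simp: t_def)
      qed
    next
      fix x assume x: "x \<in> insert c {?a..<?b}"
      show "x \<in> {x. x < 2*q*k \<and> cl1 q k x = c}"
      proof (cases "x = c")
        case True
        have "q < 2*q*k" using two_qk[of k q] assms by simp
        hence "c < 2*q*k" using assms by linarith
        then show ?thesis using assms True by (auto simp: cl1_def)
      next
        case F: False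
        hence x2: "?a \<le> x" "x < ?b" using x by auto
        define t where "t = x - (q + q*k)"
        have t: "(c-1)*(k-1) \<le> t" "t < c*(k-1)" using x2 by (auto simp: t_def)
        have eq: "Suc (c-1) * (k-1) = c*(k-1)" using assms by simp
        have "t div (k-1) = c - 1"
          using t div_range[OF k2, of t "c-1", unfolded eq] by blast
        moreover have "x < 2*q*k"
        proof -
          have "q*(k-1) + q = q*k" using assms by (cases k) auto
          hence "q + q*k + q*(k-1) = 2*q*k" by (simp add: algebra_simps)
          then show ?thesis using x2 cq by linarith
        qed
        moreover have "1 \<le> q*k" using assms by simp
        hence "\<not> x \<le> q" "\<not> x < q + q*k" using x2 by linarith+
        ultimately show ?thesis using assms by (auto simp: cl1_def t_def)
      qed
    qed
  qed
  moreover have "c \<notin> {?a..<?b}"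
  proof -
    have "1 \<le> q*k" using assms by simp
    hence "c < ?a" using assms by linarith
    then show ?thesis by auto
  qed
  moreover have "?b = ?a + (k - 1)"
  proof -
    have "c*(k-1) = (c-1)*(k-1) + (k-1)" using assms by (cases c) auto
    then show ?thesis by simp
  qed
  ultimately show ?thesis using assms by simp
qed



definition cl2 :: "nat \<Rightarrow> nat" where "cl2 x = (if x = 0 then 0 else 1)"

lemma poly_char_Bl:
  assumes q: "q \<ge> 1" and k: "k \<ge> 1"
  shows "poly (char_poly (Bl q k)) e =
    e^(2*q*k - (q+1)) * ((e + real k)^(q-1) * (e^2 - (2*real q*real k - real k) * e - real q * (real k)^2))"
proof -
  define W :: "nat \<Rightarrow> real" where "W = (\<lambda>x. if x = 0 then real q * real k else real k)"
  define Q where "Q = G (q+1) h1 (cl1 q k) W (\<lambda>_. 0)"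
  have "1 \<le> q*k" using q k by simp
  hence qk: "q + 1 \<le> 2*q*k" using two_qk[OF k, of q] by linarith
  have step1: "char_poly (Bl q k) = [:0,1:]^(2*q*k - (q+1)) * char_poly Q"
  proof -
    have "char_poly (Bl q k) = [:0,1:]^(2*q*k - (q+1)) *
       char_poly (G (q+1) h1 (cl1 q k) (\<lambda>c. \<Sum>x\<in>{x. x<2*q*k \<and> cl1 q k x = c}. 1) (\<lambda>_. 0))"
      unfolding Bl_def
      by (rule quot) (use qk cl1_lt[OF _ k] in \<open>auto simp: cl1_def\<close>)
    also have "G (q+1) h1 (cl1 q k) (\<lambda>c. \<Sum>x\<in>{x. x<2*q*k \<and> cl1 q k x = c}. 1) (\<lambda>_. 0) = Q"
      unfolding Q_def
    proof (rule G_cong)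
      fix c assume c: "c < q + 1"
      show "(\<Sum>x\<in>{x. x<2*q*k \<and> cl1 q k x = c}. 1) = W c"
      proof (cases "c = 0")
        case True then show ?thesis using card_cl0[OF k q] by (simp add: W_def)
      next
        case False then show ?thesis using card_clc[OF k q, of c] c by (simp add: W_def)
      qed
    qed
    finally show ?thesis .
  qed
  have Qc: "Q \<in> carrier_mat (q+1) (q+1)" by (simp add: Q_def G_def)
  define R where "R = G 2 (\<lambda>_ _. 1) cl2 (\<lambda>_. real q * real k) (\<lambda>x. if x = 0 then real k else 0)"
  have step2: "char_poly (Q + real k \<cdot>\<^sub>m 1\<^sub>m (q+1)) = [:0,1:]^(q+1-2) * char_poly R"
  proof -
    have "Q + real k \<cdot>\<^sub>m 1\<^sub>m (q+1) = G (q+1) (\<lambda>_ _. 1) cl2 W (\<lambda>x. if x = 0 then real k else 0)"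
      by (rule eq_matI) (auto simp: Q_def G_def W_def h1_def cl1_def cl2_def)
    also have "char_poly \<dots> = [:0,1:]^(q+1-2) *
       char_poly (G 2 (\<lambda>_ _. 1) cl2 (\<lambda>c. \<Sum>x\<in>{x. x<q+1 \<and> cl2 x = c}. W x) (\<lambda>x. if x = 0 then real k else 0))"
      by (rule quot) (use q in \<open>auto simp: cl2_def\<close>)
    also have "G 2 (\<lambda>_ _. 1) cl2 (\<lambda>c. \<Sum>x\<in>{x. x<q+1 \<and> cl2 x = c}. W x) (\<lambda>x. if x = 0 then real k else 0) = R"
      unfolding R_def
    proof (rule G_cong)
      fix c :: nat assume c: "c < 2"
      show "(\<Sum>x\<in>{x. x<q+1 \<and> cl2 x = c}. W x) = real q * real k"
      proof (cases "c = 0")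
        case True
        have "{x. x<q+1 \<and> cl2 x = c} = {0}" using True by (auto simp: cl2_def)
        then show ?thesis by (simp add: W_def)
      next
        case False
        hence c1: "c = 1" using c by simp
        have "{x. x<q+1 \<and> cl2 x = c} = {1..<q+1}" using c1 by (auto simp: cl2_def)
        then show ?thesis by (simp add: W_def)
      qed
    qed
    finally show ?thesis .
  qed
  have Rc: "R \<in> carrier_mat 2 2" by (simp add: R_def G_def)
  have polyR: "poly (char_poly R) z = (z - real q * real k - real k) * (z - real q * real k) - (real q * real k)^2" for z
  proof -
    have "poly (char_poly R) z = det (- char_matrix R z)" by (rule char_poly_matrix[OF Rc])
    also have "- char_matrix R z = mat 2 2 (\<lambda>(i,j). (if i = j then z else 0) - R $$ (i,j))"
      by (rule eq_matI) (auto simp: char_matrix_def R_def G_def)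
    also have "det \<dots> = (z - real q * real k - real k) * (z - real q * real k) - (real q * real k)^2"
      unfolding det2 by (simp add: R_def G_def cl2_def power2_eq_square algebra_simps)
    finally show ?thesis .
  qed
  have shift: "poly (char_poly Q) e = poly (char_poly (Q + real k \<cdot>\<^sub>m 1\<^sub>m (q+1))) (e + real k)"
    unfolding char_poly_shift[OF Qc] poly_pcompose by simp
  show ?thesis
    unfolding step1 poly_mult shift step2 polyR
    by (simp add: power2_eq_square algebra_simps)
qed



lemma poly_prod_lin: "poly (\<Prod>a\<leftarrow>xs. [:-a, 1::real:]) e = (\<Prod>a\<leftarrow>xs. e - a)"
  by (induction xs) (auto simp: algebra_simps)

lemma prod_lin_nz: "(\<Prod>a\<leftarrow>xs. [:-a, 1::real:]) \<noteq> 0"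
  by (subst prod_list_zero_iff) auto

lemma proots_prod_lin: "proots (\<Prod>a\<leftarrow>xs. [:-a, 1::real:]) = mset xs"
proof (induction xs)
  case (Cons a xs)
  have "proots ([:-a,1::real:] * (\<Prod>a\<leftarrow>xs. [:-a, 1::real:])) = proots [:-a,1:] + proots (\<Prod>a\<leftarrow>xs. [:-a, 1::real:])"
    by (rule proots_mult) (simp, rule prod_lin_nz)
  moreover have "proots [:-a,1::real:] = {#a#}" using proots_linear_factor[of "-a"] by simp
  moreover have "(\<Prod>a\<leftarrow>a#xs. [:-a, 1::real:]) = [:-a,1::real:] * (\<Prod>a\<leftarrow>xs. [:-a, 1::real:])" by simp
  ultimately show ?case using Cons.IH by simp
qed simp

lemma eigs_Bl:
  assumes q: "q \<ge> 1" and k: "k \<ge> 1"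
  defines "s \<equiv> sqrt (4 * (real q)^2 + 1)"
  shows "eigs (Bl q k) = rev (replicate (q-1) (- real k) @ [real k * (2*real q - 1 - s)/2] @
      replicate (2*q*k - (q+1)) 0 @ [real k * (2*real q - 1 + s)/2])"
proof -
  define r1 where "r1 = real k * (2*real q - 1 + s)/2"
  define r2 where "r2 = real k * (2*real q - 1 - s)/2"
  define xs where "xs = replicate (q-1) (- real k) @ [r2] @ replicate (2*q*k - (q+1)) 0 @ [r1]"
  have ss: "s^2 = 4 * (real q)^2 + 1" unfolding s_def by simp
  have s0: "s \<ge> 0" unfolding s_def by simp
  have cp: "char_poly (Bl q k) = (\<Prod>a\<leftarrow>xs. [:-a, 1:])"
  proof -
    have "poly (char_poly (Bl q k)) e = poly (\<Prod>a\<leftarrow>xs. [:-a, 1:]) e" for e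
    proof -
      have "(e - r1) * (e - r2) = e^2 - (2*real q*real k - real k) * e - real q * (real k)^2"
      proof -
        have "(e - r1) * (e - r2) = e^2 - (r1 + r2) * e + r1 * r2" by (simp add: algebra_simps power2_eq_square)
        also have "r1 + r2 = 2*real q*real k - real k" by (simp add: r1_def r2_def field_simps)
        also have "r1 * r2 = (real k)^2 * ((2*real q - 1)^2 - s^2) / 4"
          by (simp add: r1_def r2_def power2_eq_square algebra_simps)
        also have "\<dots> = - real q * (real k)^2" unfolding ss by (simp add: power2_eq_square algebra_simps)
        finally show ?thesis by simp
      qed
      note eq = this
      have "(\<Prod>a\<leftarrow>xs. e - a) = (e - - real k)^(q-1) * ((e - r2) * ((e - 0)^(2*q*k - (q+1)) * ((e - r1) * 1)))"
        unfolding xs_def by (simp only: map_append prod_list.append map_replicate prod_list_replicate list.map prod_list.Cons prod_list.Nil)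
      also have "\<dots> = e^(2*q*k - (q+1)) * ((e + real k)^(q-1) * ((e - r1) * (e - r2)))"
        by (simp only: diff_0_right diff_minus_eq_add mult_1_right mult_ac)
      finally show ?thesis
        unfolding poly_char_Bl[OF q k] poly_prod_lin eq by simp
    qed
    then show ?thesis using poly_eq_poly_eq_iff by blast
  qed
  have sorted: "sorted xs"
  proof -
    have a: "s \<le> 2 * real q + 1" unfolding s_def
      by (rule real_le_lsqrt) (auto simp: power2_eq_square algebra_simps)
    have b: "2 * real q - 1 \<le> s" unfolding s_def
      by (rule real_le_rsqrt) (auto simp: power2_eq_square algebra_simps)
    have "r2 + real k = real k * (2 * real q + 1 - s) / 2" unfolding r2_def by (simp add: field_simps)
    moreover have "real k * (2 * real q + 1 - s) / 2 \<ge> 0" using a by simp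
    ultimately have "- real k \<le> r2" by linarith
    moreover have "r2 \<le> 0" unfolding r2_def using b k by (simp add: mult_nonneg_nonpos)
    moreover have "0 \<le> r1"
    proof -
      have "real q \<ge> 1" using q by simp
      hence "2*real q - 1 + s \<ge> 0" using s0 by linarith
      then show ?thesis unfolding r1_def by simp
    qed
    ultimately show ?thesis unfolding xs_def by (auto simp: sorted_append)
  qed
  have "eigs (Bl q k) = rev xs"
    unfolding eigs_def cp proots_prod_lin sorted_list_of_multiset_mset sorted_sort_id[OF sorted] ..
  then show ?thesis by (simp add: xs_def r1_def r2_def)
qed



lemma spread_Bl:
  assumes q: "q \<ge> 2" and k: "k \<ge> 1"
  shows "lam (Bl q k) 1 - lam (Bl q k) (2*q*k - (q-2)) = real k * (2*real q + 1 + sqrt (4 * (real q)^2 + 1)) / 2"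
proof -
  define s where "s = sqrt (4 * (real q)^2 + 1)"
  define L where "L = replicate (q-1) (- real k) @ [real k * (2*real q - 1 - s)/2] @
      replicate (2*q*k - (q+1)) 0 @ [real k * (2*real q - 1 + s)/2]"
  have e: "eigs (Bl q k) = rev L" unfolding L_def s_def by (rule eigs_Bl) (use q k in auto)
  have "1 \<le> q*k" using q k by simp
  hence qk: "q + 1 \<le> 2*q*k" using two_qk[OF k, of q] by linarith
  have len: "length L = 2*q*k" unfolding L_def using qk q by simp
  have l1: "lam (Bl q k) 1 = real k * (2*real q - 1 + s)/2"
    unfolding lam_def e using len qk by (simp add: rev_nth L_def nth_append)
  have idx: "length L - Suc (2*q*k - (q-2) - 1) = q - 2" using len q qk by simp
  have "lam (Bl q k) (2*q*k - (q-2)) = rev L ! (2*q*k - (q-2) - 1)" by (simp add: lam_def e)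
  also have "\<dots> = L ! (q-2)" by (subst rev_nth) (use len q qk idx in auto)
  also have "\<dots> = - real k"
  proof -
    have "q - 2 < q - 1" using q by simp
    then show ?thesis unfolding L_def by (simp add: nth_append)
  qed
  finally have l2: "lam (Bl q k) (2*q*k - (q-2)) = - real k" .
  show ?thesis unfolding l1 l2 s_def by (simp add: field_simps)
qed

lemma looped_Bl: "looped_graph_mat (2*q*k) (Bl q k)"
  unfolding looped_graph_mat_def Bl_def G_def
  by (auto simp: h1_def intro!: eq_matI)

lemma finite_looped: "finite {A. looped_graph_mat n A}"
proof -
  let ?F = "(\<lambda>f. mat n n f) ` ({..<n} \<times> {..<n} \<rightarrow>\<^sub>E ({0,1} :: real set))"
  have "{A. looped_graph_mat n A} \<subseteq> ?F"
  proof
    fix A assume A: "A \<in> {A. looped_graph_mat n A}"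
    hence Ac: "A \<in> carrier_mat n n" and v: "\<forall>a<n. \<forall>b<n. A $$ (a, b) = 0 \<or> A $$ (a, b) = 1"
      unfolding looped_graph_mat_def by auto
    define f where "f = (\<lambda>ij. if ij \<in> {..<n} \<times> {..<n} then A $$ ij else undefined)"
    have "A = mat n n f" using Ac by (auto simp: f_def intro!: eq_matI)
    moreover have "f \<in> {..<n} \<times> {..<n} \<rightarrow>\<^sub>E ({0,1} :: real set)"
    proof (rule PiE_I)
      fix x assume "x \<in> {..<n} \<times> {..<n}"
      then show "f x \<in> {0,1}" using v by (cases x) (auto simp: f_def)
    next
      fix x assume "x \<notin> {..<n} \<times> {..<n}"
      then show "f x = undefined" by (simp add: f_def)
    qed
    ultimately show "A \<in> ?F" by blast
  qed
  moreover have "finite ?F" by (intro finite_imageI finite_PiE) auto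
  ultimately show ?thesis using finite_subset by blast
qed

lemma spread_loop_ge:
  assumes "looped_graph_mat n A"
  shows "spread_ij i j A \<le> spread_loop_n i j n"
  unfolding spread_loop_n_def
  by (rule Max_ge) (use assms finite_looped in auto)



lemma perm_char:
  fixes A :: "real mat"
  assumes A: "A \<in> carrier_mat n n" and bij: "bij_betw \<sigma> {..<n} {..<n}"
  shows "char_poly (mat n n (\<lambda>(x,y). A $$ (\<sigma> x, \<sigma> y))) = char_poly A"
proof -
  define P :: "real mat" where "P = mat n n (\<lambda>(i,c). if \<sigma> i = c then 1 else 0)"
  define Pt :: "real mat" where "Pt = mat n n (\<lambda>(c,i). if \<sigma> i = c then 1 else 0)"
  have sl: "\<sigma> i < n" if "i < n" for i using bij that by (auto simp: bij_betw_def)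
  have inj: "\<sigma> i = \<sigma> l \<longleftrightarrow> i = l" if "i < n" "l < n" for i l
    using bij that by (auto simp: bij_betw_def inj_on_def)
  have PA: "P * A = mat n n (\<lambda>(i,y). A $$ (\<sigma> i, y))"
    by (rule eq_matI) (use A sl in \<open>auto simp: P_def scalar_prod_def if_distrib[of "\<lambda>x. x * _"] sum.delta cong: if_cong\<close>)
  have PAP: "P * A * Pt = mat n n (\<lambda>(x,y). A $$ (\<sigma> x, \<sigma> y))"
    unfolding PA
    by (rule eq_matI) (use A sl in \<open>auto simp: Pt_def scalar_prod_def if_distrib[of "\<lambda>x. _ * x"] sum.delta cong: if_cong\<close>)
  have PP: "P * Pt = 1\<^sub>m n"
    by (rule eq_matI) (use sl inj in \<open>auto simp: P_def Pt_def scalar_prod_def if_distrib[of "\<lambda>x. _ * x"] sum.delta cong: if_cong\<close>)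
  have PP2: "Pt * P = 1\<^sub>m n"
  proof (rule eq_matI)
    fix c d assume c: "c < dim_row (1\<^sub>m n)" and d: "d < dim_col (1\<^sub>m n)"
    have "(Pt * P) $$ (c,d) = (\<Sum>i<n. (if \<sigma> i = c then 1 else 0) * (if \<sigma> i = d then 1 else 0 :: real))"
      using c d by (simp add: P_def Pt_def scalar_prod_def lessThan_atLeast0)
    also have "\<dots> = (\<Sum>e<n. (if e = c then 1 else 0) * (if e = d then 1 else 0 :: real))"
      using sum.reindex_bij_betw[OF bij, of "\<lambda>e. (if e = c then 1 else 0) * (if e = d then 1 else 0 :: real)"] by simp
    also have "\<dots> = 1\<^sub>m n $$ (c,d)" using c d by (auto simp: if_distrib[of "\<lambda>x. x * _"] sum.delta cong: if_cong)
    finally show "(Pt * P) $$ (c,d) = 1\<^sub>m n $$ (c,d)" .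
  qed (auto simp: P_def Pt_def)
  have "similar_mat (mat n n (\<lambda>(x,y). A $$ (\<sigma> x, \<sigma> y))) A"
    by (rule similar_matI[of _ _ P Pt n]) (use A PP PP2 PAP in \<open>auto simp: P_def Pt_def\<close>)
  then show ?thesis by (rule char_poly_similar)
qed



lemma Kloop_Bl:
  assumes q: "q \<ge> 1"
  shows "eigs (Kloop (2*q) q) = eigs (Bl q 1)"
proof -
  define \<sigma> where "\<sigma> = (\<lambda>x::nat. if x = 0 then 0 else if x \<le> q then q + x - 1 else x - q)"
  define \<tau> where "\<tau> = (\<lambda>y::nat. if y = 0 then 0 else if y < q then y + q else y - q + 1)"
  have bij: "bij_betw \<sigma> {..<2*q} {..<2*q}"
    by (rule bij_betw_byWitness[of _ \<tau>]) (use q in \<open>auto simp: \<sigma>_def \<tau>_def\<close>)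
  have Kc: "Kloop (2*q) q \<in> carrier_mat (2*q) (2*q)" by (simp add: Kloop_def)
  have "Bl q 1 = mat (2*q) (2*q) (\<lambda>(x,y). Kloop (2*q) q $$ (\<sigma> x, \<sigma> y))"
  proof (rule eq_matI)
    fix x y assume x: "x < dim_row (mat (2*q) (2*q) (\<lambda>(x,y). Kloop (2*q) q $$ (\<sigma> x, \<sigma> y)))"
      and y: "y < dim_col (mat (2*q) (2*q) (\<lambda>(x,y). Kloop (2*q) q $$ (\<sigma> x, \<sigma> y)))"
    have xy: "x < 2*q" "y < 2*q" using x y by auto
    have sx: "\<sigma> x < 2*q" "\<sigma> y < 2*q" using bij xy by (auto simp: bij_betw_def)
    have inj: "\<sigma> x = \<sigma> y \<longleftrightarrow> x = y" using bij xy by (auto simp: bij_betw_def inj_on_def)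
    show "Bl q 1 $$ (x,y) = mat (2*q) (2*q) (\<lambda>(x,y). Kloop (2*q) q $$ (\<sigma> x, \<sigma> y)) $$ (x,y)"
      using xy sx inj q by (auto simp: Bl_def G_def Kloop_def h1_def cl1_def \<sigma>_def)
  qed (auto simp: Bl_def G_def)
  hence "char_poly (Bl q 1) = char_poly (Kloop (2*q) q)" using perm_char[OF Kc bij] by simp
  then show ?thesis by (simp add: eigs_def)
qed



theorem mainTheorem10:
  fixes j :: nat
  assumes j1: "j \<ge> 1"
    and s_exists: "convergent (\<lambda>n. spread_n 0 j n / real n)"
    and s_loop: "(\<lambda>n. spread_loop_n 0 j n / real n) \<longlonglongrightarrow> s_ij 0 j"
  shows "lam (Kloop (2*j+4) (j+2)) 1 - lam (Kloop (2*j+4) (j+2)) ((2*j+4) - j)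
           = ((2*real j+5) + sqrt (4*real j^2 + 16*real j + 17)) / 2
         \<and> s_ij 0 j \<ge> ((2*real j+5) + sqrt (4*real j^2 + 16*real j + 17)) / (4*(real j+2))"
proof -
  define q where "q = j + 2"
  have q2: "q \<ge> 2" by (simp add: q_def)
  have sq: "4 * (real q)^2 + 1 = 4*real j^2 + 16*real j + 17"
    by (simp add: q_def power2_eq_square algebra_simps)
  have lin: "2 * real q + 1 = 2*real j + 5" by (simp add: q_def)
  define S where "S = sqrt (4*real j^2 + 16*real j + 17)"
  have part1: "lam (Kloop (2*j+4) (j+2)) 1 - lam (Kloop (2*j+4) (j+2)) ((2*j+4) - j)
           = ((2*real j+5) + S) / 2"
  proof -
    have n: "2*j+4 = 2*q" "j+2 = q" by (simp_all add: q_def)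
    have kq: "Kloop (2*j+4) (j+2) = Kloop (2*q) q" unfolding n ..
    have e: "eigs (Kloop (2*j+4) (j+2)) = eigs (Bl q 1)"
      unfolding kq using Kloop_Bl[of q] q2 by simp
    have i: "(2*j+4) - j = 2*q*1 - (q-2)" by (simp add: q_def)
    have "lam (Kloop (2*j+4) (j+2)) 1 - lam (Kloop (2*j+4) (j+2)) ((2*j+4) - j)
        = lam (Bl q 1) 1 - lam (Bl q 1) (2*q*1 - (q-2))"
      unfolding lam_def e i ..
    also have "\<dots> = real 1 * (2*real q + 1 + sqrt (4 * (real q)^2 + 1)) / 2"
      by (rule spread_Bl[OF q2]) simp
    finally show ?thesis unfolding sq lin S_def by simp
  qed
  define c where "c = ((2*real j+5) + S) / (4*(real j+2))"
  define a where "a = (\<lambda>n. spread_loop_n 0 j n / real n)"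
  have bound: "c \<le> a (2*q*k)" if k: "k \<ge> 1" for k
  proof -
    have dim: "dim_row (Bl q k) = 2*q*k" by (simp add: Bl_def G_def)
    have "spread_ij 0 j (Bl q k) = lam (Bl q k) 1 - lam (Bl q k) (2*q*k - (q-2))"
      unfolding spread_ij_def dim by (simp add: q_def)
    also have "\<dots> = real k * (2*real q + 1 + sqrt (4 * (real q)^2 + 1)) / 2"
      by (rule spread_Bl[OF q2 k])
    finally have sp: "spread_ij 0 j (Bl q k) = real k * ((2*real j+5) + S) / 2"
      unfolding sq lin S_def .
    have "spread_ij 0 j (Bl q k) \<le> spread_loop_n 0 j (2*q*k)"
      by (rule spread_loop_ge[OF looped_Bl])
    hence "spread_ij 0 j (Bl q k) / real (2*q*k) \<le> spread_loop_n 0 j (2*q*k) / real (2*q*k)"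
      by (rule divide_right_mono) simp
    hence "real k * ((2*real j+5) + S) / 2 / real (2*q*k) \<le> a (2*q*k)"
      unfolding a_def sp .
    moreover have "real k * ((2*real j+5) + S) / 2 / real (2*q*k) = c"
    proof -
      have "real k > 0" "real q > 0" using k q2 by auto
      hence "real k * ((2*real j+5) + S) / 2 / real (2*q*k) = ((2*real j+5) + S) / (4 * real q)"
        by (simp add: field_simps)
      also have "real q = real j + 2" by (simp add: q_def)
      finally show ?thesis by (simp add: c_def)
    qed
    ultimately show ?thesis by simp
  qed
  define g where "g = (\<lambda>k::nat. 2*q*(k+1))"
  have sm: "strict_mono g" unfolding g_def using q2 by (intro strict_monoI) simp
  have lim: "(a \<circ> g) \<longlonglongrightarrow> s_ij 0 j"
    using LIMSEQ_subseq_LIMSEQ[OF s_loop[folded a_def] sm] .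
  have "c \<le> s_ij 0 j"
  proof (rule LIMSEQ_le_const[OF lim], intro exI allI impI)
    fix n :: nat
    show "c \<le> (a \<circ> g) n" using bound[of "n+1"] by (simp add: g_def)
  qed
  then show ?thesis using part1 unfolding c_def S_def by simp
qed


end
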